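(* Assume (A1). Let $\delta>0$ and $\mathcal R=\{r_1,\dots,r_m\}$ with positive integers $r_1<\dots<r_m\le t$. With probability at least $1-\delta$, both of the following hold: (i) for all $k\le m$: $\lVert\bm C(t)-\hat{\bm C}^{[r_k]}(t)\rVert_\infty\le\frac{A_{\delta,n,m}}{\sqrt{r_k}}+\lVert\bm C(t)-\bm C^{[r_k]}(t)\rVert_\infty$; (ii) for all $k\le m-1$: $\lVert\bm C^{[r_k]}(t)-\bm C^{[r_{k+1}]}(t)-\hat{\bm C}^{[r_k]}(t)+\hat{\bm C}^{[r_{k+1}]}(t)\rVert_\infty\le A_{\delta,n,m}\sqrt{\frac{1-r_k/r_{k+1}}{r_k}}$, where $A_{\delta,n,m}=\sqrt{2\ln[(2m-1)n(n-1)/\delta]}$.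
   Context: For matrices $\lVert\bm M\rVert_\infty=\max_{i,j}|M_{ij}|$. Let $\ell_1,\dots,\ell_n:\mathbb{R}^d\to\{-1,1\}$ be functions ($n\ge2$) and $X_1,X_2,\dots$ random inputs with $X_k\sim D_k$. (A1): for every finite $t$, $(X_1,\dots,X_t)\sim\prod_{k=1}^tD_k$. Correlation matrix $C_{ij}(k)=\mathbb{E}_{X\sim D_k}[\ell_i(X)\ell_j(X)]$; $\bm C^{[r]}(t)=\frac1r\sum_{k=t-r+1}^t\bm C(k)$; $\hat{\bm C}^{[r]}(t)=\frac1r\sum_{k=t-r+1}^t\bm v_k\bm v_k^T$ with $\bm v_k=(\ell_1(X_k),\dots,\ell_n(X_k))^T$. *)

theory Defs
  imports "HOL-Probability.Probability"
begin

text \<open>n x n matrices are represented as functions nat => nat => real, indices 1..n.\<close>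

definition maxnorm :: "nat \<Rightarrow> (nat \<Rightarrow> nat \<Rightarrow> real) \<Rightarrow> real" where
  "maxnorm n A = Max {\<bar>A i j\<bar> | i j. i \<in> {1..n} \<and> j \<in> {1..n}}"

definition corr :: "'a measure \<Rightarrow> (nat \<Rightarrow> 'b::topological_space \<Rightarrow> real) \<Rightarrow> (nat \<Rightarrow> 'a \<Rightarrow> 'b)
    \<Rightarrow> nat \<Rightarrow> nat \<Rightarrow> nat \<Rightarrow> real" where
  "corr M l X k i j = (\<integral>x. l i x * l j x \<partial>(distr M borel (X k)))"

definition avg_corr :: "'a measure \<Rightarrow> (nat \<Rightarrow> 'b::topological_space \<Rightarrow> real) \<Rightarrow> (nat \<Rightarrow> 'a \<Rightarrow> 'b)
    \<Rightarrow> nat \<Rightarrow> nat \<Rightarrow> nat \<Rightarrow> nat \<Rightarrow> real" where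
  "avg_corr M l X r t i j = (1 / real r) * (\<Sum>k\<in>{t - r + 1..t}. corr M l X k i j)"

definition emp_corr :: "(nat \<Rightarrow> 'b \<Rightarrow> real) \<Rightarrow> (nat \<Rightarrow> 'a \<Rightarrow> 'b)
    \<Rightarrow> nat \<Rightarrow> nat \<Rightarrow> 'a \<Rightarrow> nat \<Rightarrow> nat \<Rightarrow> real" where
  "emp_corr l X r t \<omega> i j = (1 / real r) * (\<Sum>k\<in>{t - r + 1..t}. l i (X k \<omega>) * l j (X k \<omega>))"

definition A_const :: "real \<Rightarrow> nat \<Rightarrow> nat \<Rightarrow> real" where
  "A_const \<delta> n m = sqrt (2 * ln ((2 * real m - 1) * real n * (real n - 1) / \<delta>))"

end

theory Submission imports Defs begin

lemma hoeff:
  fixes M :: "'a measure" and X :: "nat \<Rightarrow> 'a \<Rightarrow> real ^ 'd"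
    and l :: "nat \<Rightarrow> real ^ 'd \<Rightarrow> real" and w :: "nat \<Rightarrow> real"
  assumes P: "prob_space M"
    and Xm: "\<And>k. X k \<in> borel_measurable M"
    and ind: "prob_space.indep_vars M (\<lambda>_. borel) X {1..}"
    and li: "l i \<in> borel_measurable borel" and lj: "l j \<in> borel_measurable borel"
    and vi: "\<And>x. l i x \<in> {-1, 1}" and vj: "\<And>x. l j x \<in> {-1, 1}"
    and fin: "finite I" and sub: "I \<subseteq> {1..}"
    and S: "(\<Sum>k\<in>I. (w k)\<^sup>2) > 0" and A: "A \<ge> 0"
  shows "measure M {\<omega> \<in> space M. \<bar>(\<Sum>k\<in>I. w k * (l i (X k \<omega>) * l j (X k \<omega>)))
            - (\<Sum>k\<in>I. w k * corr M l X k i j)\<bar> \<ge> A * sqrt (\<Sum>k\<in>I. (w k)\<^sup>2)}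
         \<le> 2 * exp (- (A\<^sup>2 / 2))"
proof -
  interpret prob_space M by (rule P)
  define Y where "Y = (\<lambda>k \<omega>. w k * (l i (X k \<omega>) * l j (X k \<omega>)))"
  have pm: "\<forall>x. l i x * l j x = 1 \<or> l i x * l j x = -1"
    using vi vj by (metis empty_iff insert_iff mult_1_left mult_minus1 mult_1_right minus_minus)
  have Ym: "Y k \<in> borel_measurable M" for k
    unfolding Y_def using Xm li lj by measurable
  have E: "expectation (Y k) = w k * corr M l X k i j" for k
  proof -
    have "corr M l X k i j = expectation (\<lambda>\<omega>. l i (X k \<omega>) * l j (X k \<omega>))"
      unfolding corr_def by (rule integral_distr) (use Xm li lj in measurable)
    then show ?thesis unfolding Y_def by simp
  qed
  have indY: "indep_vars (\<lambda>_. borel) Y I"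
    unfolding Y_def
    by (rule indep_vars_compose2[where X=X, OF indep_vars_subset[OF ind sub]])
       (use li lj in measurable)
  interpret H: Hoeffding_ineq M I Y "\<lambda>k. - \<bar>w k\<bar>" "\<lambda>k. \<bar>w k\<bar>" "\<Sum>k\<in>I. expectation (Y k)"
  proof unfold_locales
    fix k assume "k \<in> I"
    show "AE x in M. Y k x \<in> {- \<bar>w k\<bar>..\<bar>w k\<bar>}"
    proof (rule AE_I2)
      fix x show "Y k x \<in> {- \<bar>w k\<bar>..\<bar>w k\<bar>}"
        using pm[rule_format, of "X k x"] unfolding Y_def by (auto simp: abs_if)
    qed
  qed (use fin indY in auto)
  have sq: "(\<Sum>k\<in>I. (\<bar>w k\<bar> - - \<bar>w k\<bar>)\<^sup>2) = 4 * (\<Sum>k\<in>I. (w k)\<^sup>2)"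
    by (simp add: sum_distrib_left power2_eq_square)
  have "prob {x\<in>space M. \<bar>(\<Sum>k\<in>I. Y k x) - (\<Sum>k\<in>I. expectation (Y k))\<bar> \<ge> A * sqrt (\<Sum>k\<in>I. (w k)\<^sup>2)}
     \<le> 2 * exp (-2 * (A * sqrt (\<Sum>k\<in>I. (w k)\<^sup>2))\<^sup>2 / (\<Sum>k\<in>I. (\<bar>w k\<bar> - - \<bar>w k\<bar>)\<^sup>2))"
    by (rule H.Hoeffding_ineq_abs_ge) (use A S sq in auto)
  also have "-2 * (A * sqrt (\<Sum>k\<in>I. (w k)\<^sup>2))\<^sup>2 / (\<Sum>k\<in>I. (\<bar>w k\<bar> - - \<bar>w k\<bar>)\<^sup>2) = - (A\<^sup>2 / 2)"
    unfolding sq using S by (simp add: power_mult_distrib)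
  finally show ?thesis unfolding E unfolding Y_def by simp
qed

lemma maxnorm_le_iff:
  assumes "n \<ge> 1"
  shows "maxnorm n A \<le> c \<longleftrightarrow> (\<forall>i\<in>{1..n}. \<forall>j\<in>{1..n}. \<bar>A i j\<bar> \<le> c)"
proof -
  have eq: "{\<bar>A i j\<bar> | i j. i \<in> {1..n} \<and> j \<in> {1..n}} = (\<lambda>(i,j). \<bar>A i j\<bar>) ` ({1..n} \<times> {1..n})"
    by force
  have ne: "{1..n} \<times> {1..n} \<noteq> {}" using assms by auto
  show ?thesis unfolding maxnorm_def eq
    by (subst Max_le_iff) (use ne in auto)
qed

lemma card_pairs:
  "card {(i,j). i \<in> {1..n::nat} \<and> j \<in> {1..n} \<and> i < j} * 2 = n * (n - 1)"
proof -
  define P where "P = {(i,j). i \<in> {1..n::nat} \<and> j \<in> {1..n} \<and> i < j}"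
  define D where "D = (\<lambda>i. (i,i)) ` {1..n}"
  have fP: "finite P" unfolding P_def
    by (rule finite_subset[of _ "{1..n} \<times> {1..n}"]) auto
  have split: "{1..n} \<times> {1..n} = P \<union> prod.swap ` P \<union> D"
    unfolding P_def D_def by (auto simp: image_iff)
  have cD: "card D = n" unfolding D_def by (subst card_image) (auto simp: inj_on_def)
  have cS: "card (prod.swap ` P) = card P" by (rule card_image) (auto simp: inj_on_def)
  have d1: "P \<inter> prod.swap ` P = {}" unfolding P_def by auto
  have d2: "(P \<union> prod.swap ` P) \<inter> D = {}" unfolding P_def D_def by auto
  have "n * n = card (P \<union> prod.swap ` P \<union> D)" using split[symmetric] by (simp add: card_cartesian_product)
  also have "\<dots> = card P + card P + n"
  proof -
    have fD: "finite D" unfolding D_def by simp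
    have fS: "finite (prod.swap ` P)" using fP by simp
    have "card (P \<union> prod.swap ` P \<union> D) = card (P \<union> prod.swap ` P) + card D"
      by (rule card_Un_disjoint) (use fP fS fD d2 in auto)
    also have "card (P \<union> prod.swap ` P) = card P + card (prod.swap ` P)"
      by (rule card_Un_disjoint) (use fP fS d1 in auto)
    finally show ?thesis using cD cS by simp
  qed
  finally have "n * n = 2 * card P + n" by simp
  then show ?thesis unfolding P_def[symmetric]
    by (simp add: algebra_simps diff_mult_distrib2)
qed

lemma wsum:
  fixes f :: "nat \<Rightarrow> real" and a b t :: nat
  assumes "1 \<le> a" "a < b" "b \<le> t"
  defines "w \<equiv> (\<lambda>k. (if k \<in> {t - a + 1..t} then 1 / real a else 0) - 1 / real b)"
  shows "(\<Sum>k\<in>{t - b + 1..t}. w k * f k)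
          = (1 / real a) * (\<Sum>k\<in>{t - a + 1..t}. f k) - (1 / real b) * (\<Sum>k\<in>{t - b + 1..t}. f k)"
    and "(\<Sum>k\<in>{t - b + 1..t}. (w k)\<^sup>2) = (1 - real a / real b) / real a"
proof -
  have sub: "{t - b + 1..t} \<inter> {t - a + 1..t} = {t - a + 1..t}" using assms by auto
  have c2: "card ({t - b + 1..t} \<inter> - {t - a + 1..t}) = b - a"
  proof -
    have "{t - b + 1..t} \<inter> - {t - a + 1..t} = {t - b + 1..t - a}" using assms by auto
    then show ?thesis using assms by simp
  qed
  show "(\<Sum>k\<in>{t - b + 1..t}. w k * f k)
          = (1 / real a) * (\<Sum>k\<in>{t - a + 1..t}. f k) - (1 / real b) * (\<Sum>k\<in>{t - b + 1..t}. f k)"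
  proof -
    have "(\<Sum>k\<in>{t - b + 1..t}. w k * f k) = (\<Sum>k\<in>{t - b + 1..t}. (if k \<in> {t - a + 1..t} then f k / real a else 0)) - (\<Sum>k\<in>{t - b + 1..t}. f k / real b)"
      unfolding w_def sum_subtractf[symmetric] by (rule sum.cong) (auto simp: field_simps)
    also have "(\<Sum>k\<in>{t - b + 1..t}. (if k \<in> {t - a + 1..t} then f k / real a else 0)) = (\<Sum>k\<in>{t - a + 1..t}. f k / real a)"
      by (simp only: sum.inter_restrict[symmetric] finite_atLeastAtMost sub)
    finally show ?thesis by (simp add: sum_divide_distrib)
  qed
  have "(\<Sum>k\<in>{t - b + 1..t}. (w k)\<^sup>2)
      = (\<Sum>k\<in>{t - b + 1..t}. if k \<in> {t - a + 1..t} then (1 / real a - 1 / real b)\<^sup>2 else (1 / real b)\<^sup>2)"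
    unfolding w_def by (rule sum.cong) auto
  also have "\<dots> = real a * (1 / real a - 1 / real b)\<^sup>2 + real (b - a) * (1 / real b)\<^sup>2"
    by (simp only: sum.If_cases finite_atLeastAtMost Collect_mem_eq sub sum_constant c2) (use assms in simp)
  also have "\<dots> = (1 - real a / real b) / real a"
    using assms by (simp add: of_nat_diff field_simps power2_eq_square)
  finally show "(\<Sum>k\<in>{t - b + 1..t}. (w k)\<^sup>2) = (1 - real a / real b) / real a" .
qed

lemma final_bound:
  assumes "prob_space M" and "S \<in> sets M" and "U \<in> sets M"
    and "\<And>\<omega>. \<omega> \<in> space M \<Longrightarrow> \<omega> \<notin> U \<Longrightarrow> \<omega> \<in> S"
    and "measure M U \<le> d"
  shows "measure M S \<ge> 1 - d"
proof -
  interpret prob_space M by (rule assms(1))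
  have "space M - S \<subseteq> U" using assms(4) by auto
  then have "prob (space M - S) \<le> prob U" using assms(3) by (intro finite_measure_mono) auto
  moreover have "prob (space M - S) = 1 - prob S" using assms(2) by (rule prob_compl)
  ultimately show ?thesis using assms(5) by linarith
qed

theorem corollary1:
  fixes M :: "'a measure" and X :: "nat \<Rightarrow> 'a \<Rightarrow> real ^ 'd"
    and l :: "nat \<Rightarrow> real ^ 'd \<Rightarrow> real"
    and n m t :: nat and r :: "nat \<Rightarrow> nat" and \<delta> :: real
  assumes "prob_space M"
    and "\<And>k. X k \<in> borel_measurable M"
    and A1: "prob_space.indep_vars M (\<lambda>_. borel) X {1..}"
    and "\<And>i. i \<in> {1..n} \<Longrightarrow> l i \<in> borel_measurable borel"
    and "\<And>i x. i \<in> {1..n} \<Longrightarrow> l i x \<in> {-1, 1}"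
    and "n \<ge> 2" and "\<delta> > 0" and "m \<ge> 1"
    and "\<And>k. k \<in> {1..m} \<Longrightarrow> r k \<ge> 1"
    and "\<And>k. k \<in> {1..<m} \<Longrightarrow> r k < r (Suc k)"
    and "r m \<le> t"
  shows "measure M {\<omega> \<in> space M.
      (\<forall>k\<in>{1..m}.
         maxnorm n (\<lambda>i j. corr M l X t i j - emp_corr l X (r k) t \<omega> i j)
           \<le> A_const \<delta> n m / sqrt (real (r k))
              + maxnorm n (\<lambda>i j. corr M l X t i j - avg_corr M l X (r k) t i j)) \<and>
      (\<forall>k\<in>{1..<m}.
         maxnorm n (\<lambda>i j. avg_corr M l X (r k) t i j - avg_corr M l X (r (Suc k)) t i j
                         - emp_corr l X (r k) t \<omega> i j + emp_corr l X (r (Suc k)) t \<omega> i j)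
           \<le> A_const \<delta> n m * sqrt ((1 - real (r k) / real (r (Suc k))) / real (r k)))}
    \<ge> 1 - \<delta>"
proof -
  interpret prob_space M by (rule assms(1))
  note Xm = assms(2) and lm = assms(4) and lv = assms(5)
  show ?thesis
  proof (cases "\<delta> \<ge> 1")
    case True
    then show ?thesis using measure_nonneg[of M] by (smt (verit))
  next
    case False
    define N where "N = {1..n}"
    have n1: "n \<ge> 1" using assms(6) by simp
    define Q where "Q = (2 * real m - 1) * real n * (real n - 1) / \<delta>"
    have Qge: "Q \<ge> 1"
    proof -
      have "(2 * real m - 1) \<ge> 1" using assms(8) by simp
      moreover have "real n * (real n - 1) \<ge> 1"
      proof -
        have "real n \<ge> 2" using assms(6) by simp
        then show ?thesis using mult_mono[of 1 "real n" 1 "real n - 1"] by simp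
      qed
      ultimately have "(2 * real m - 1) * (real n * (real n - 1)) \<ge> 1"
        using mult_mono[of 1 "2 * real m - 1" 1 "real n * (real n - 1)"] by simp
      then show ?thesis unfolding Q_def using assms(7) False
        by (simp add: field_simps mult.assoc)
    qed
    define A where "A = A_const \<delta> n m"
    have AQ: "A = sqrt (2 * ln Q)" unfolding A_def A_const_def Q_def by simp
    have A0: "A \<ge> 0" unfolding AQ using Qge by simp
    have expA: "exp (- (A\<^sup>2 / 2)) = 1 / Q"
    proof -
      have "A\<^sup>2 = 2 * ln Q" unfolding AQ using Qge by simp
      then show ?thesis using Qge by (simp add: exp_minus exp_ln inverse_eq_divide)
    qed
    have rmono: "r k \<le> r j" if "1 \<le> k" "k \<le> j" "j \<le> m" for k j
    proof -
      have "j \<le> m \<longrightarrow> r k \<le> r j" using that(2)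
      proof (induction j rule: dec_induct)
        case base then show ?case by simp
      next
        case (step q)
        show ?case using step assms(10)[of q] that(1) by auto
      qed
      then show ?thesis using that by simp
    qed
    have rt: "r k \<le> t" if "k \<in> {1..m}" for k
      using rmono[of k m] that assms(11) by auto
    have r1: "r k \<ge> 1" if "k \<in> {1..m}" for k using assms(9) that by simp
    have sub1: "{t - a + 1..t} \<subseteq> {1..}" for a :: nat by auto
    have cardI: "card {t - a + 1..t} = a" if "a \<le> t" for a using that by simp
    have emp_sym: "emp_corr l X a t \<omega> i j = emp_corr l X a t \<omega> j i" for a \<omega> i j
      unfolding emp_corr_def by (simp add: mult.commute)
    have avg_sym: "avg_corr M l X a t i j = avg_corr M l X a t j i" for a i j
      unfolding avg_corr_def corr_def by (simp add: mult.commute)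
    have sq1: "l i x * l i x = 1" if "i \<in> N" for i x
      using lv[of i x] that unfolding N_def by auto
    have emp_diag: "emp_corr l X a t \<omega> i i = 1" if "i \<in> N" "1 \<le> a" "a \<le> t" for a \<omega> i
      unfolding emp_corr_def using that sq1[OF that(1)] cardI[OF that(3)] by simp
    have corr_diag: "corr M l X k i i = 1" if "i \<in> N" for k i
    proof -
      have ps: "prob_space (distr M borel (X k))" by (rule prob_space_distr) (use Xm in simp)
      have "corr M l X k i i = integral\<^sup>L (distr M borel (X k)) (\<lambda>x. 1)"
        unfolding corr_def using sq1[OF that] by simp
      also have "\<dots> = 1" using prob_space.prob_space[OF ps] by simp
      finally show ?thesis .
    qed
    have avg_diag: "avg_corr M l X a t i i = 1" if "i \<in> N" "1 \<le> a" "a \<le> t" for a i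
      unfolding avg_corr_def using that corr_diag[OF that(1)] cardI[OF that(3)] by simp
    have emp_m: "(\<lambda>\<omega>. emp_corr l X a t \<omega> i j) \<in> borel_measurable M" if "i \<in> N" "j \<in> N" for a i j
    proof -
      note [measurable] = lm[of i] lm[of j] Xm
      show ?thesis unfolding emp_corr_def using that unfolding N_def by measurable
    qed
    define e1 where "e1 k = A / sqrt (real (r k))" for k
    define e2 where "e2 k = A * sqrt ((1 - real (r k) / real (r (Suc k))) / real (r k))" for k
    define D1 where "D1 k i j \<omega> = emp_corr l X (r k) t \<omega> i j - avg_corr M l X (r k) t i j" for k i j \<omega>
    define D2 where "D2 k i j \<omega> = (emp_corr l X (r k) t \<omega> i j - emp_corr l X (r (Suc k)) t \<omega> i j)
        - (avg_corr M l X (r k) t i j - avg_corr M l X (r (Suc k)) t i j)" for k i j \<omega>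
    define P where "P = {(i,j). i \<in> {1..n::nat} \<and> j \<in> {1..n} \<and> i < j}"
    define B1 where "B1 = (\<lambda>(k, (i, j)). {\<omega> \<in> space M. e1 k \<le> \<bar>D1 k i j \<omega>\<bar>})"
    define B2 where "B2 = (\<lambda>(k, (i, j)). {\<omega> \<in> space M. e2 k \<le> \<bar>D2 k i j \<omega>\<bar>})"
    define K1 where "K1 = {1..m} \<times> P"
    define K2 where "K2 = {1..<m} \<times> P"
    have finP: "finite P" unfolding P_def
      by (rule finite_subset[of _ "{1..n} \<times> {1..n}"]) auto
    have PN: "i \<in> N \<and> j \<in> N \<and> i < j" if "(i, j) \<in> P" for i j using that unfolding P_def N_def by auto
    have D1m: "D1 k i j \<in> borel_measurable M" if "i \<in> N" "j \<in> N" for k i j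
      unfolding D1_def[abs_def] using emp_m[OF that] by measurable
    have D2m: "D2 k i j \<in> borel_measurable M" if "i \<in> N" "j \<in> N" for k i j
      unfolding D2_def[abs_def] using emp_m[OF that] by measurable
    have B1s: "B1 x \<in> sets M" if "x \<in> K1" for x
    proof -
      obtain k i j where x: "x = (k, (i, j))" by (cases x) auto
      with that have "i \<in> N" "j \<in> N" using PN unfolding K1_def by auto
      then have [measurable]: "D1 k i j \<in> borel_measurable M" by (rule D1m)
      show ?thesis unfolding x B1_def by simp measurable
    qed
    have B2s: "B2 x \<in> sets M" if "x \<in> K2" for x
    proof -
      obtain k i j where x: "x = (k, (i, j))" by (cases x) auto
      with that have "i \<in> N" "j \<in> N" using PN unfolding K2_def by auto
      then have [measurable]: "D2 k i j \<in> borel_measurable M" by (rule D2m)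
      show ?thesis unfolding x B2_def by simp measurable
    qed
    have pB1: "prob (B1 x) \<le> 2 / Q" if "x \<in> K1" for x
    proof -
      obtain k i j where x: "x = (k, (i, j))" by (cases x) auto
      with that have k: "k \<in> {1..m}" and ij: "i \<in> {1..n}" "j \<in> {1..n}"
        using PN unfolding K1_def N_def by auto
      define a where "a = r k"
      have a1: "1 \<le> a" and at: "a \<le> t" using r1[OF k] rt[OF k] unfolding a_def by auto
      have Sw: "(\<Sum>k\<in>{t - a + 1..t}. (1 / real a)\<^sup>2) = 1 / real a"
        using cardI[OF at] a1 by (simp add: power2_eq_square)
      have H: "prob {\<omega> \<in> space M. \<bar>(\<Sum>k\<in>{t - a + 1..t}. 1 / real a * (l i (X k \<omega>) * l j (X k \<omega>)))
            - (\<Sum>k\<in>{t - a + 1..t}. 1 / real a * corr M l X k i j)\<bar> \<ge> A * sqrt (\<Sum>k\<in>{t - a + 1..t}. (1 / real a)\<^sup>2)}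
         \<le> 2 * exp (- (A\<^sup>2 / 2))"
        by (rule hoeff[OF assms(1) Xm A1 lm[OF ij(1)] lm[OF ij(2)] lv[OF ij(1)] lv[OF ij(2)]])
           (use Sw a1 A0 in auto)
      have "B1 x = {\<omega> \<in> space M. \<bar>(\<Sum>k\<in>{t - a + 1..t}. 1 / real a * (l i (X k \<omega>) * l j (X k \<omega>)))
            - (\<Sum>k\<in>{t - a + 1..t}. 1 / real a * corr M l X k i j)\<bar> \<ge> A * sqrt (\<Sum>k\<in>{t - a + 1..t}. (1 / real a)\<^sup>2)}"
        unfolding x B1_def D1_def e1_def Sw emp_corr_def avg_corr_def a_def[symmetric]
        by (simp add: sum_distrib_left real_sqrt_divide a_def)
      with H show ?thesis using expA by simp
    qed
    have pB2: "prob (B2 x) \<le> 2 / Q" if "x \<in> K2" for x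
    proof -
      obtain k i j where x: "x = (k, (i, j))" by (cases x) auto
      with that have k: "k \<in> {1..<m}" and ij: "i \<in> {1..n}" "j \<in> {1..n}"
        using PN unfolding K2_def N_def by auto
      define a where "a = r k"
      define b where "b = r (Suc k)"
      have a1: "1 \<le> a" and ab: "a < b" and bt: "b \<le> t"
        using r1[of k] rt[of "Suc k"] assms(10)[OF k] k unfolding a_def b_def by auto
      define w where "w = (\<lambda>k. (if k \<in> {t - a + 1..t} then 1 / real a else 0) - 1 / real b)"
      have W1: "(\<Sum>k\<in>{t - b + 1..t}. w k * f k)
          = (1 / real a) * (\<Sum>k\<in>{t - a + 1..t}. f k) - (1 / real b) * (\<Sum>k\<in>{t - b + 1..t}. f k)" for f
        unfolding w_def by (rule wsum(1)[OF a1 ab bt])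
      have W2: "(\<Sum>k\<in>{t - b + 1..t}. (w k)\<^sup>2) = (1 - real a / real b) / real a"
        unfolding w_def by (rule wsum(2)[OF a1 ab bt])
      have Spos: "(1 - real a / real b) / real a > 0" using a1 ab by (simp add: field_simps)
      have H: "prob {\<omega> \<in> space M. \<bar>(\<Sum>k\<in>{t - b + 1..t}. w k * (l i (X k \<omega>) * l j (X k \<omega>)))
            - (\<Sum>k\<in>{t - b + 1..t}. w k * corr M l X k i j)\<bar> \<ge> A * sqrt (\<Sum>k\<in>{t - b + 1..t}. (w k)\<^sup>2)}
         \<le> 2 * exp (- (A\<^sup>2 / 2))"
        by (rule hoeff[OF assms(1) Xm A1 lm[OF ij(1)] lm[OF ij(2)] lv[OF ij(1)] lv[OF ij(2)]])
           (use W2 Spos A0 in auto)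
      have "B2 x = {\<omega> \<in> space M. \<bar>(\<Sum>k\<in>{t - b + 1..t}. w k * (l i (X k \<omega>) * l j (X k \<omega>)))
            - (\<Sum>k\<in>{t - b + 1..t}. w k * corr M l X k i j)\<bar> \<ge> A * sqrt (\<Sum>k\<in>{t - b + 1..t}. (w k)\<^sup>2)}"
        unfolding x B2_def D2_def e2_def W1 W2 emp_corr_def avg_corr_def a_def[symmetric] b_def[symmetric]
        by (simp add: a_def b_def)
      with H show ?thesis using expA by simp
    qed
    have bnd: "\<bar>B i j\<bar> \<le> maxnorm n B" if "i \<in> N" "j \<in> N" for B i j
      using maxnorm_le_iff[OF n1, of B "maxnorm n B"] that unfolding N_def by simp
    define U where "U = (\<Union>x\<in>K1. B1 x) \<union> (\<Union>x\<in>K2. B2 x)"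
    have finK1: "finite K1" and finK2: "finite K2" unfolding K1_def K2_def using finP by auto
    have Us: "U \<in> sets M" unfolding U_def using B1s B2s finK1 finK2 by auto
    have good1: "\<bar>D1 k i j \<omega>\<bar> \<le> e1 k"
      if \<omega>: "\<omega> \<in> space M" "\<omega> \<notin> U" and k: "k \<in> {1..m}" and ij: "i \<in> N" "j \<in> N" for \<omega> k i j
    proof -
      have lt: "\<bar>D1 k i j \<omega>\<bar> \<le> e1 k" if "i \<in> N" "j \<in> N" "i < j" for i j
      proof -
        have "(k, (i, j)) \<in> K1" unfolding K1_def P_def using k that unfolding N_def by auto
        then have "\<omega> \<notin> B1 (k, (i, j))" using \<omega> unfolding U_def by auto
        then show ?thesis using \<omega> unfolding B1_def by auto
      qed
      have sym: "D1 k i j \<omega> = D1 k j i \<omega>" unfolding D1_def using emp_sym avg_sym by metis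
      have e0: "e1 k \<ge> 0" unfolding e1_def using A0 by simp
      show ?thesis
      proof (cases i j rule: linorder_cases)
        case less then show ?thesis using lt ij by auto
      next
        case greater then show ?thesis using lt[of j i] ij sym by auto
      next
        case equal then show ?thesis unfolding D1_def
          using emp_diag[OF ij(1) r1[OF k] rt[OF k]] avg_diag[OF ij(1) r1[OF k] rt[OF k]] e0 by simp
      qed
    qed
    have good2: "\<bar>D2 k i j \<omega>\<bar> \<le> e2 k"
      if \<omega>: "\<omega> \<in> space M" "\<omega> \<notin> U" and k: "k \<in> {1..<m}" and ij: "i \<in> N" "j \<in> N" for \<omega> k i j
    proof -
      have lt: "\<bar>D2 k i j \<omega>\<bar> \<le> e2 k" if "i \<in> N" "j \<in> N" "i < j" for i j
      proof -
        have "(k, (i, j)) \<in> K2" unfolding K2_def P_def using k that unfolding N_def by auto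
        then have "\<omega> \<notin> B2 (k, (i, j))" using \<omega> unfolding U_def by auto
        then show ?thesis using \<omega> unfolding B2_def by auto
      qed
      have sym: "D2 k i j \<omega> = D2 k j i \<omega>" unfolding D2_def using emp_sym avg_sym by metis
      have k1: "k \<in> {1..m}" "Suc k \<in> {1..m}" using k by auto
      have e0: "e2 k \<ge> 0"
      proof -
        have "real (r k) < real (r (Suc k))" "real (r k) \<ge> 1" using assms(10)[OF k] r1[OF k1(1)] by auto
        then have "(1 - real (r k) / real (r (Suc k))) / real (r k) \<ge> 0" by (simp add: field_simps)
        then show ?thesis unfolding e2_def using A0 by simp
      qed
      show ?thesis
      proof (cases i j rule: linorder_cases)
        case less then show ?thesis using lt ij by auto
      next
        case greater then show ?thesis using lt[of j i] ij sym by auto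
      next
        case equal then show ?thesis unfolding D2_def
          using emp_diag[OF ij(1) r1[OF k1(1)] rt[OF k1(1)]] avg_diag[OF ij(1) r1[OF k1(1)] rt[OF k1(1)]]
            emp_diag[OF ij(1) r1[OF k1(2)] rt[OF k1(2)]] avg_diag[OF ij(1) r1[OF k1(2)] rt[OF k1(2)]] e0 by simp
      qed
    qed
    have probU: "prob U \<le> \<delta>"
    proof -
      have "prob U \<le> prob (\<Union>x\<in>K1. B1 x) + prob (\<Union>x\<in>K2. B2 x)"
        unfolding U_def by (rule measure_Un_le) (use B1s B2s finK1 finK2 in auto)
      also have "prob (\<Union>x\<in>K1. B1 x) \<le> (\<Sum>x\<in>K1. prob (B1 x))"
        by (rule finite_measure_subadditive_finite) (use B1s finK1 in auto)
      also have "\<dots> \<le> real (card K1) * (2 / Q)"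
        using sum_bounded_above[of K1 "\<lambda>x. prob (B1 x)" "2 / Q"] pB1 by auto
      also have "prob (\<Union>x\<in>K2. B2 x) \<le> (\<Sum>x\<in>K2. prob (B2 x))"
        by (rule finite_measure_subadditive_finite) (use B2s finK2 in auto)
      also have "\<dots> \<le> real (card K2) * (2 / Q)"
        using sum_bounded_above[of K2 "\<lambda>x. prob (B2 x)" "2 / Q"] pB2 by auto
      also have "real (card K1) * (2 / Q) + real (card K2) * (2 / Q) = \<delta>"
      proof -
        have cP: "2 * real (card P) = real n * (real n - 1)"
        proof -
          have "real (card P * 2) = real (n * (n - 1))" unfolding P_def using card_pairs by metis
          then show ?thesis using n1 by (simp add: of_nat_diff)
        qed
        have c1: "card K1 = m * card P" unfolding K1_def by (simp add: card_cartesian_product)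
        have c2: "real (card K2) = (real m - 1) * card P" unfolding K2_def
          using assms(8) by (simp add: card_cartesian_product of_nat_diff)
        have "real (card K1) * (2 / Q) + real (card K2) * (2 / Q)
            = (2 * real m - 1) * (2 * real (card P)) / Q"
          using Qge unfolding c1 c2 by (simp add: field_simps)
        also have "\<dots> = \<delta>" unfolding cP Q_def using assms(7) Qge Q_def by (simp add: field_simps)
        finally show ?thesis .
      qed
      finally show ?thesis by simp
    qed
    show ?thesis
    proof (rule final_bound[OF assms(1) _ Us _ probU])
      fix \<omega> assume \<omega>: "\<omega> \<in> space M" "\<omega> \<notin> U"
      show "\<omega> \<in> {\<omega> \<in> space M.
      (\<forall>k\<in>{1..m}.
         maxnorm n (\<lambda>i j. corr M l X t i j - emp_corr l X (r k) t \<omega> i j)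
           \<le> A_const \<delta> n m / sqrt (real (r k))
              + maxnorm n (\<lambda>i j. corr M l X t i j - avg_corr M l X (r k) t i j)) \<and>
      (\<forall>k\<in>{1..<m}.
         maxnorm n (\<lambda>i j. avg_corr M l X (r k) t i j - avg_corr M l X (r (Suc k)) t i j
                         - emp_corr l X (r k) t \<omega> i j + emp_corr l X (r (Suc k)) t \<omega> i j)
           \<le> A_const \<delta> n m * sqrt ((1 - real (r k) / real (r (Suc k))) / real (r k)))}"
        unfolding mem_Collect_eq maxnorm_le_iff[OF n1] A_def[symmetric] e1_def[symmetric] e2_def[symmetric]
      proof (intro conjI ballI)
        show "\<omega> \<in> space M" by (rule \<omega>(1))
      next
        fix k i j assume k: "k \<in> {1..m}" and i: "i \<in> {1..n}" and j: "j \<in> {1..n}"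
        have "\<bar>corr M l X t i j - emp_corr l X (r k) t \<omega> i j\<bar>
            \<le> \<bar>corr M l X t i j - avg_corr M l X (r k) t i j\<bar> + \<bar>D1 k i j \<omega>\<bar>"
          unfolding D1_def by linarith
        also have "\<dots> \<le> maxnorm n (\<lambda>i j. corr M l X t i j - avg_corr M l X (r k) t i j) + e1 k"
          using bnd[of i j "\<lambda>i j. corr M l X t i j - avg_corr M l X (r k) t i j"]
            good1[OF \<omega> k, of i j] i j unfolding N_def by simp
        finally show "\<bar>corr M l X t i j - emp_corr l X (r k) t \<omega> i j\<bar>
            \<le> e1 k + maxnorm n (\<lambda>i j. corr M l X t i j - avg_corr M l X (r k) t i j)" by simp
      next
        fix k i j assume k: "k \<in> {1..<m}" and i: "i \<in> {1..n}" and j: "j \<in> {1..n}"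
        show "\<bar>avg_corr M l X (r k) t i j - avg_corr M l X (r (Suc k)) t i j
                         - emp_corr l X (r k) t \<omega> i j + emp_corr l X (r (Suc k)) t \<omega> i j\<bar> \<le> e2 k"
          using good2[OF \<omega> k, of i j] i j unfolding N_def D2_def by simp
      qed
    next
      show "{\<omega> \<in> space M.
      (\<forall>k\<in>{1..m}.
         maxnorm n (\<lambda>i j. corr M l X t i j - emp_corr l X (r k) t \<omega> i j)
           \<le> A_const \<delta> n m / sqrt (real (r k))
              + maxnorm n (\<lambda>i j. corr M l X t i j - avg_corr M l X (r k) t i j)) \<and>
      (\<forall>k\<in>{1..<m}.
         maxnorm n (\<lambda>i j. avg_corr M l X (r k) t i j - avg_corr M l X (r (Suc k)) t i j
                         - emp_corr l X (r k) t \<omega> i j + emp_corr l X (r (Suc k)) t \<omega> i j)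
           \<le> A_const \<delta> n m * sqrt ((1 - real (r k) / real (r (Suc k))) / real (r k)))} \<in> sets M"
        unfolding maxnorm_le_iff[OF n1]
        apply (rule predE)
        apply (intro pred_intros_logic(3) pred_intros_finite(3) finite_atLeastAtMost finite_atLeastLessThan)
        subgoal premises pr for k i j
        proof -
          have [measurable]: "(\<lambda>\<omega>. emp_corr l X (r k) t \<omega> i j) \<in> borel_measurable M"
            using emp_m pr unfolding N_def by auto
          show ?thesis by measurable
        qed
        subgoal premises pr for k i j
        proof -
          have [measurable]: "(\<lambda>\<omega>. emp_corr l X (r k) t \<omega> i j) \<in> borel_measurable M"
            "(\<lambda>\<omega>. emp_corr l X (r (Suc k)) t \<omega> i j) \<in> borel_measurable M"
            using emp_m pr unfolding N_def by auto
          show ?thesis by measurable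
        qed
        done
    qed
  qed
qed

end
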